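(* Let $l>0$. For each $d\ge1$ let $Z_1,Z_2\sim\mathcal{N}(0,1)$ and $Z_x\sim\mathcal{N}_d(0,I_d)$ be random variables on a common probability space, not necessarily independent. Then, uniformly over all $\alpha\in[0,\infty)$, $$\lim_{d\to\infty}\Big(\mathbb{E}\big[Z_2\,\{1\wedge\exp(-l\alpha Z_1-l^2\lVert Z_x\rVert^2/(2d))\}\big]-\mathbb{E}\big[Z_2\,\{1\wedge\exp(-l\alpha Z_1-l^2/2)\}\big]\Big)=0.$$ *)

theory Defs
  imports "HOL-Probability.Probability"
begin

definition std_normal_measure :: "real measure" where
  "std_normal_measure = density lborel (\<lambda>x. ennreal (std_normal_density x))"

text \<open>The d-dimensional standard normal N_d(0, I_d), as a measure on functions
  {..<d} -> real (extensional), i.e. the product of d copies of N(0,1).\<close>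
definition std_normal_vec_measure :: "nat \<Rightarrow> (nat \<Rightarrow> real) measure" where
  "std_normal_vec_measure d = PiM {..<d} (\<lambda>_. std_normal_measure)"

end

theory Submission
  imports Defs
begin

lemma sets_snm[measurable_cong, simp]: "sets std_normal_measure = sets borel"
  unfolding std_normal_measure_def by simp

lemma prob_snm: "prob_space std_normal_measure"
  unfolding std_normal_measure_def using prob_space_normal_density by simp

lemma snm_mom: "integrable std_normal_measure (\<lambda>x. x ^ k) \<and>
   integral\<^sup>L std_normal_measure (\<lambda>x. x ^ k) = integral\<^sup>L lborel (\<lambda>x. std_normal_density x * x ^ k)"
  unfolding std_normal_measure_def
  using integrable_std_normal_moment[of k]
  by (subst integrable_density; simp add: integral_density)

lemma snm_int: "integrable std_normal_measure (\<lambda>x. x ^ k)"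
  using snm_mom by blast

lemma snm2: "integral\<^sup>L std_normal_measure (\<lambda>x. x ^ 2) = 1"
  using snm_mom[of 2] integral_std_normal_moment_even[of 1] by simp

lemma snm4: "integral\<^sup>L std_normal_measure (\<lambda>x. x ^ 4) = 3"
  using snm_mom[of 4] integral_std_normal_moment_even[of 2] by (simp add: fact_numeral)

lemma snm_f: "integrable std_normal_measure (\<lambda>t. (t^2-1)^2) \<and> integral\<^sup>L std_normal_measure (\<lambda>t. (t^2-1)^2) = 2
   \<and> integrable std_normal_measure (\<lambda>t. t^2-1) \<and> integral\<^sup>L std_normal_measure (\<lambda>t. t^2-1) = 0
   \<and> integrable std_normal_measure (\<lambda>t. 1::real) \<and> integral\<^sup>L std_normal_measure (\<lambda>t. 1::real) = 1"
proof -
  interpret prob_space std_normal_measure by (rule prob_snm)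
  have e: "(\<lambda>t::real. (t^2-1)^2) = (\<lambda>t. t^4 - 2 * t^2 + 1)"
    by (auto simp: power2_eq_square power4_eq_xxxx algebra_simps)
  have i2: "integrable std_normal_measure (\<lambda>t::real. t^2)" "integrable std_normal_measure (\<lambda>t::real. t^4)"
    using snm_int by auto
  show ?thesis unfolding e using i2 snm2 snm4 by (simp add: prob_space)
qed

lemma snm_one: "integral\<^sup>L std_normal_measure (\<lambda>t. 1::real) = 1"
  using prob_space.prob_space[OF prob_snm] by simp

definition fk :: "nat \<Rightarrow> nat \<Rightarrow> nat \<Rightarrow> real \<Rightarrow> real" where
  "fk i j k t = (if k = i \<and> k = j then (t^2-1)^2 else if k = i \<or> k = j then t^2-1 else 1)"

lemma fk_eqs: "k \<noteq> i \<Longrightarrow> k \<noteq> j \<Longrightarrow> fk i j k = (\<lambda>_. 1)"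
  "fk i i i = (\<lambda>t. (t^2-1)^2)" "i \<noteq> j \<Longrightarrow> fk i j i = (\<lambda>t. t^2-1)" "i \<noteq> j \<Longrightarrow> fk i j j = (\<lambda>t. t^2-1)"
  by (auto simp: fk_def fun_eq_iff)

lemma fk_prod: assumes "i < d" "j < d"
  shows "(\<Prod>k<d. fk i j k (x k)) = (x i ^2 - 1) * (x j^2 - 1)"
proof -
  have "(\<Prod>k<d. fk i j k (x k)) = (\<Prod>k\<in>{i,j}. fk i j k (x k))"
    using assms by (intro prod.mono_neutral_right) (auto simp: fk_def)
  then show ?thesis by (cases "i = j") (auto simp: fk_def power2_eq_square)
qed

lemma fk_int: assumes "i < d" "j < d"
  shows "(\<Prod>k<d. integral\<^sup>L std_normal_measure (fk i j k)) = (if i = j then 2 else 0)"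
proof -
  have "(\<Prod>k<d. integral\<^sup>L std_normal_measure (fk i j k)) = (\<Prod>k\<in>{i,j}. integral\<^sup>L std_normal_measure (fk i j k))"
    using assms snm_f snm_one by (intro prod.mono_neutral_right) (auto simp: fk_eqs)
  then show ?thesis using snm_f snm_one by (cases "i = j") (auto simp: fk_eqs)
qed

lemma fk_integrable: "integrable std_normal_measure (fk i j k)"
  using snm_f unfolding fk_def by (cases "k = i \<and> k = j"; cases "k = i \<or> k = j") auto

lemma vec_moment:
  shows "integrable (std_normal_vec_measure d) (\<lambda>x. (\<Sum>i<d. (x i^2 - 1))^2)
    \<and> integral\<^sup>L (std_normal_vec_measure d) (\<lambda>x. (\<Sum>i<d. (x i^2 - 1))^2) = 2 * real d"
proof -
  interpret product_prob_space "\<lambda>_. std_normal_measure" "{..<d}"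
    by (simp add: product_prob_space_def product_prob_space_axioms_def product_sigma_finite_def prob_snm prob_space_imp_sigma_finite)
  have sq: "(\<Sum>i<d. (x i^2 - 1))^2 = (\<Sum>i<d. \<Sum>j<d. \<Prod>k<d. fk i j k (x k))" for x :: "nat \<Rightarrow> real"
    by (simp add: power2_eq_square sum_product fk_prod)
  have ii: "integrable (std_normal_vec_measure d) (\<lambda>x. \<Prod>k<d. fk i j k (x k))" for i j
    unfolding std_normal_vec_measure_def by (rule product_integrable_prod) (auto simp: fk_integrable)
  have iv: "integral\<^sup>L (std_normal_vec_measure d) (\<lambda>x. \<Prod>k<d. fk i j k (x k)) = (if i = j then 2 else 0)"
    if "i < d" "j < d" for i j
    unfolding std_normal_vec_measure_def
    by (subst product_integral_prod) (auto simp: fk_integrable fk_int that)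
  have "integrable (std_normal_vec_measure d) (\<lambda>x. \<Sum>i<d. \<Sum>j<d. \<Prod>k<d. fk i j k (x k))"
    using ii by auto
  moreover have "integral\<^sup>L (std_normal_vec_measure d) (\<lambda>x. \<Sum>i<d. \<Sum>j<d. \<Prod>k<d. fk i j k (x k)) = 2 * real d"
    using ii iv by (simp add: Bochner_Integration.integral_sum sum.delta)
  ultimately show ?thesis unfolding sq by simp
qed

lemma exp_lip0: fixes x y :: real assumes "x \<le> y" "y \<le> 0" shows "exp y - exp x \<le> y - x"
proof -
  have "exp y - exp x = exp y * (1 - exp (x - y))" by (simp add: algebra_simps exp_diff)
  also have "\<dots> \<le> exp y * (y - x)"
  proof (intro mult_left_mono)
    show "1 - exp (x - y) \<le> y - x" using exp_ge_add_one_self[of "x - y"] by linarith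
  qed auto
  also have "\<dots> \<le> 1 * (y - x)" using assms by (intro mult_right_mono) auto
  finally show ?thesis by simp
qed

lemma minexp_lip: fixes a b :: real shows "\<bar>min 1 (exp a) - min 1 (exp b)\<bar> \<le> \<bar>a - b\<bar>"
proof -
  have e: "min 1 (exp t) = exp (min 0 t)" for t :: real by (cases "t \<le> 0") (auto simp: min_def)
  have g: "\<bar>exp x - exp y\<bar> \<le> \<bar>x - y\<bar>" if "x \<le> 0" "y \<le> 0" for x y :: real
    using exp_lip0[of x y] exp_lip0[of y x] that by (cases "x \<le> y") auto
  have "\<bar>exp (min 0 a) - exp (min 0 b)\<bar> \<le> \<bar>min 0 a - min 0 b\<bar>" by (rule g) auto
  also have "\<dots> \<le> \<bar>a - b\<bar>" by (auto simp: min_def)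
  finally show ?thesis unfolding e .
qed

lemma amgm_d: fixes u v \<delta> :: real assumes "\<delta> > 0" shows "u * v \<le> (\<delta> * u^2 + v^2 / \<delta>) / 2"
proof -
  have "0 \<le> (\<delta> * u - v)^2 / \<delta>" using assms by simp
  also have "(\<delta> * u - v)^2 / \<delta> = \<delta> * u^2 - 2 * u * v + v^2 / \<delta>"
    using assms by (simp add: power2_eq_square field_simps)
  finally show ?thesis by simp
qed

lemma per_d:
  fixes M :: "'a measure" and Z1 Z2 :: "'a \<Rightarrow> real" and X :: "'a \<Rightarrow> nat \<Rightarrow> real"
  assumes P: "prob_space M"
    and Z1m[measurable]: "Z1 \<in> borel_measurable M"
    and Z2m[measurable]: "Z2 \<in> borel_measurable M"
    and Z2d: "distr M lborel Z2 = std_normal_measure"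
    and Rm[measurable]: "(\<lambda>\<omega>. restrict (X \<omega>) {..<d}) \<in> M \<rightarrow>\<^sub>M PiM {..<d} (\<lambda>_. lborel)"
    and Rd: "distr M (PiM {..<d} (\<lambda>_. lborel)) (\<lambda>\<omega>. restrict (X \<omega>) {..<d}) = std_normal_vec_measure d"
    and d: "d \<ge> 1" and \<delta>: "\<delta> > 0"
  shows "\<bar>(\<integral>\<omega>. Z2 \<omega> * min 1 (exp (- l * \<alpha> * Z1 \<omega>
                 - l\<^sup>2 * (\<Sum>i<d. (X \<omega> i)\<^sup>2) / (2 * real d))) \<partial>M)
            - (\<integral>\<omega>. Z2 \<omega> * min 1 (exp (- l * \<alpha> * Z1 \<omega> - l\<^sup>2 / 2)) \<partial>M)\<bar>
         \<le> \<delta> / 2 + l^4 / (4 * \<delta> * real d)"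
proof -
  interpret prob_space M by (rule P)
  define R where "R \<omega> = restrict (X \<omega>) {..<d}" for \<omega>
  have Rm'[measurable]: "R \<in> M \<rightarrow>\<^sub>M PiM {..<d} (\<lambda>_. lborel)" using Rm unfolding R_def .
  define S where "S \<omega> = (\<Sum>i<d. (R \<omega> i)\<^sup>2)" for \<omega>
  have SX: "(\<Sum>i<d. (X \<omega> i)\<^sup>2) = S \<omega>" for \<omega> unfolding S_def R_def by simp
  have hm[measurable]: "(\<lambda>x::nat\<Rightarrow>real. \<Sum>i<d. (x i)\<^sup>2) \<in> borel_measurable (PiM {..<d} (\<lambda>_. lborel))"
    by measurable
  have hm2[measurable]: "(\<lambda>x::nat\<Rightarrow>real. (\<Sum>i<d. ((x i)\<^sup>2 - 1))^2) \<in> borel_measurable (PiM {..<d} (\<lambda>_. lborel))"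
    by measurable
  have Sm[measurable]: "S \<in> borel_measurable M"
    unfolding S_def using measurable_compose[OF Rm' hm] by simp
  define Y where "Y \<omega> = S \<omega> / real d - 1" for \<omega>
  have Ym[measurable]: "Y \<in> borel_measurable M" unfolding Y_def by measurable
  have dpos: "real d > 0" using d by simp
  have Ysq: "(Y \<omega>)^2 = (\<Sum>i<d. ((R \<omega> i)\<^sup>2 - 1))^2 / (real d)^2" for \<omega>
  proof -
    have "(\<Sum>i<d. ((R \<omega> i)\<^sup>2 - 1)) = S \<omega> - real d" unfolding S_def by (simp add: sum_subtractf)
    moreover have "Y \<omega> = (S \<omega> - real d) / real d" unfolding Y_def using dpos by (simp add: field_simps)
    ultimately show ?thesis by (simp add: power_divide)
  qed
  have vm: "integrable M (\<lambda>\<omega>. (\<Sum>i<d. ((R \<omega> i)\<^sup>2 - 1))^2) \<and> integral\<^sup>L M (\<lambda>\<omega>. (\<Sum>i<d. ((R \<omega> i)\<^sup>2 - 1))^2) = 2 * real d"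
    using vec_moment[of d] Rd[folded R_def]
      integrable_distr_eq[OF Rm' hm2] integral_distr[OF Rm' hm2] by simp
  have Yint: "integrable M (\<lambda>\<omega>. (Y \<omega>)^2)" unfolding Ysq using vm by simp
  have YE: "integral\<^sup>L M (\<lambda>\<omega>. (Y \<omega>)^2) = 2 / real d" unfolding Ysq using vm dpos
    by (simp add: power2_eq_square)
  have z2m: "(\<lambda>x::real. x^k) \<in> borel_measurable lborel" for k by measurable
  have Z2k: "integrable M (\<lambda>\<omega>. (Z2 \<omega>)^k)" for k
    using integrable_distr_eq[OF _ z2m, of Z2 M k] Z2d snm_int by simp
  have Z2E: "integral\<^sup>L M (\<lambda>\<omega>. (Z2 \<omega>)^2) = 1"
    using integral_distr[OF _ z2m, of Z2 M 2] Z2d snm2 by simp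
  have Z2i: "integrable M Z2" using Z2k[of 1] by simp
  define A where "A \<omega> = Z2 \<omega> * min 1 (exp (- l * \<alpha> * Z1 \<omega> - l\<^sup>2 * S \<omega> / (2 * real d)))" for \<omega>
  define B where "B \<omega> = Z2 \<omega> * min 1 (exp (- l * \<alpha> * Z1 \<omega> - l\<^sup>2 / 2))" for \<omega>
  have Ai: "integrable M A"
  proof (rule Bochner_Integration.integrable_bound[OF Z2i])
    show "A \<in> borel_measurable M" unfolding A_def by measurable
    show "AE x in M. norm (A x) \<le> norm (Z2 x)"
      by (intro AE_I2) (auto simp: A_def abs_mult intro!: mult_left_le)
  qed
  have Bi: "integrable M B"
  proof (rule Bochner_Integration.integrable_bound[OF Z2i])
    show "B \<in> borel_measurable M" unfolding B_def by measurable
    show "AE x in M. norm (B x) \<le> norm (Z2 x)"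
      by (intro AE_I2) (auto simp: B_def abs_mult intro!: mult_left_le)
  qed
  define U where "U \<omega> = (\<delta> * (Z2 \<omega>)^2 + (l^2/2)^2 * (Y \<omega>)^2 / \<delta>) / 2" for \<omega>
  have Ui: "integrable M U" unfolding U_def using Z2k[of 2] Yint by simp
  have UE: "integral\<^sup>L M U = \<delta> / 2 + l^4 / (4 * \<delta> * real d)"
  proof -
    have "integral\<^sup>L M U = (\<delta> * integral\<^sup>L M (\<lambda>\<omega>. (Z2 \<omega>)^2) + (l^2/2)^2 * integral\<^sup>L M (\<lambda>\<omega>. (Y \<omega>)^2) / \<delta>) / 2"
      unfolding U_def using Z2k[of 2] Yint by simp
    also have "\<dots> = \<delta> / 2 + l^4 / (4 * \<delta> * real d)"
      unfolding Z2E YE using \<delta> dpos by (simp add: field_simps power2_eq_square power4_eq_xxxx)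
    finally show ?thesis .
  qed
  have pw: "\<bar>A \<omega> - B \<omega>\<bar> \<le> U \<omega>" for \<omega>
  proof -
    have "\<bar>A \<omega> - B \<omega>\<bar> = \<bar>Z2 \<omega>\<bar> * \<bar>min 1 (exp (- l * \<alpha> * Z1 \<omega> - l\<^sup>2 * S \<omega> / (2 * real d))) - min 1 (exp (- l * \<alpha> * Z1 \<omega> - l\<^sup>2 / 2))\<bar>"
      unfolding A_def B_def by (simp add: abs_mult[symmetric] algebra_simps)
    also have "\<dots> \<le> \<bar>Z2 \<omega>\<bar> * \<bar>(- l * \<alpha> * Z1 \<omega> - l\<^sup>2 * S \<omega> / (2 * real d)) - (- l * \<alpha> * Z1 \<omega> - l\<^sup>2 / 2)\<bar>"
      by (intro mult_left_mono minexp_lip) auto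
    also have "(- l * \<alpha> * Z1 \<omega> - l\<^sup>2 * S \<omega> / (2 * real d)) - (- l * \<alpha> * Z1 \<omega> - l\<^sup>2 / 2) = - (l^2/2) * Y \<omega>"
      unfolding Y_def using dpos by (simp add: field_simps)
    also have "\<bar>Z2 \<omega>\<bar> * \<bar>- (l^2/2) * Y \<omega>\<bar> = \<bar>Z2 \<omega>\<bar> * \<bar>(l^2/2) * Y \<omega>\<bar>" by simp
    also have "\<dots> \<le> (\<delta> * \<bar>Z2 \<omega>\<bar>^2 + \<bar>(l^2/2) * Y \<omega>\<bar>^2 / \<delta>) / 2" by (rule amgm_d[OF \<delta>])
    also have "\<bar>(l^2/2) * Y \<omega>\<bar>^2 = (l^2/2)^2 * (Y \<omega>)^2" by (simp only: power2_abs power_mult_distrib)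
    also have "(\<delta> * \<bar>Z2 \<omega>\<bar>^2 + (l^2/2)^2 * (Y \<omega>)^2 / \<delta>) / 2 = U \<omega>" unfolding U_def by simp
    finally show ?thesis .
  qed
  have "\<bar>integral\<^sup>L M A - integral\<^sup>L M B\<bar> = \<bar>integral\<^sup>L M (\<lambda>\<omega>. A \<omega> - B \<omega>)\<bar>"
    using Ai Bi by simp
  also have "\<dots> \<le> integral\<^sup>L M (\<lambda>\<omega>. \<bar>A \<omega> - B \<omega>\<bar>)" by (rule integral_abs_bound)
  also have "\<dots> \<le> integral\<^sup>L M U"
    using Ai Bi Ui pw by (intro integral_mono) auto
  finally show ?thesis unfolding UE A_def B_def SX .
qed

theorem lemma5:
  fixes l :: real
    and M :: "nat \<Rightarrow> 'a measure"
    and Z1 Z2 :: "nat \<Rightarrow> 'a \<Rightarrow> real"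
    and Zx :: "nat \<Rightarrow> 'a \<Rightarrow> nat \<Rightarrow> real"
  assumes l_pos: "l > 0"
    and prob: "\<And>d. d \<ge> 1 \<Longrightarrow> prob_space (M d)"
    and Z1_meas: "\<And>d. d \<ge> 1 \<Longrightarrow> Z1 d \<in> borel_measurable (M d)"
    and Z1_distr: "\<And>d. d \<ge> 1 \<Longrightarrow> distr (M d) lborel (Z1 d) = std_normal_measure"
    and Z2_meas: "\<And>d. d \<ge> 1 \<Longrightarrow> Z2 d \<in> borel_measurable (M d)"
    and Z2_distr: "\<And>d. d \<ge> 1 \<Longrightarrow> distr (M d) lborel (Z2 d) = std_normal_measure"
    and Zx_meas: "\<And>d. d \<ge> 1 \<Longrightarrow>
        (\<lambda>\<omega>. restrict (Zx d \<omega>) {..<d}) \<in> M d \<rightarrow>\<^sub>M PiM {..<d} (\<lambda>_. lborel)"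
    and Zx_distr: "\<And>d. d \<ge> 1 \<Longrightarrow>
        distr (M d) (PiM {..<d} (\<lambda>_. lborel)) (\<lambda>\<omega>. restrict (Zx d \<omega>) {..<d})
          = std_normal_vec_measure d"
  shows "\<forall>\<epsilon>>0. \<exists>N. \<forall>d\<ge>N. \<forall>\<alpha>::real. \<alpha> \<ge> 0 \<longrightarrow>
           \<bar>(\<integral>\<omega>. Z2 d \<omega> * min 1 (exp (- l * \<alpha> * Z1 d \<omega>
                 - l\<^sup>2 * (\<Sum>i<d. (Zx d \<omega> i)\<^sup>2) / (2 * real d))) \<partial>M d)
            - (\<integral>\<omega>. Z2 d \<omega> * min 1 (exp (- l * \<alpha> * Z1 d \<omega> - l\<^sup>2 / 2)) \<partial>M d)\<bar> < \<epsilon>"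
proof (intro allI impI)
  fix \<epsilon> :: real assume e: "\<epsilon> > 0"
  define N where "N = nat \<lceil>l^4 / \<epsilon>^2\<rceil> + 1"
  show "\<exists>N. \<forall>d\<ge>N. \<forall>\<alpha>::real. \<alpha> \<ge> 0 \<longrightarrow>
           \<bar>(\<integral>\<omega>. Z2 d \<omega> * min 1 (exp (- l * \<alpha> * Z1 d \<omega>
                 - l\<^sup>2 * (\<Sum>i<d. (Zx d \<omega> i)\<^sup>2) / (2 * real d))) \<partial>M d)
            - (\<integral>\<omega>. Z2 d \<omega> * min 1 (exp (- l * \<alpha> * Z1 d \<omega> - l\<^sup>2 / 2)) \<partial>M d)\<bar> < \<epsilon>"
  proof (intro exI allI impI)
    fix d \<alpha> assume dN: "N \<le> d" and a: "(0::real) \<le> \<alpha>"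
    have d1: "d \<ge> 1" using dN unfolding N_def by simp
    have "real d \<ge> real (nat \<lceil>l^4 / \<epsilon>^2\<rceil>) + 1" using dN unfolding N_def by simp
    moreover have "real (nat \<lceil>l^4 / \<epsilon>^2\<rceil>) \<ge> l^4 / \<epsilon>^2" by linarith
    ultimately have dl: "real d > l^4 / \<epsilon>^2" by linarith
    have dpos: "real d > 0" using d1 by simp
    have "l^4 < \<epsilon>^2 * real d" using dl e by (simp add: field_simps)
    also have "\<dots> < 2 * \<epsilon>^2 * real d" using e dpos by simp
    finally have "l^4 < 2 * \<epsilon>^2 * real d" .
    then have small: "l^4 / (4 * \<epsilon> * real d) < \<epsilon> / 2" using e dpos
      by (simp add: field_simps power2_eq_square)
    have "\<bar>(\<integral>\<omega>. Z2 d \<omega> * min 1 (exp (- l * \<alpha> * Z1 d \<omega>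
                 - l\<^sup>2 * (\<Sum>i<d. (Zx d \<omega> i)\<^sup>2) / (2 * real d))) \<partial>M d)
            - (\<integral>\<omega>. Z2 d \<omega> * min 1 (exp (- l * \<alpha> * Z1 d \<omega> - l\<^sup>2 / 2)) \<partial>M d)\<bar>
         \<le> \<epsilon> / 2 + l^4 / (4 * \<epsilon> * real d)"
      by (rule per_d[OF prob[OF d1] Z1_meas[OF d1] Z2_meas[OF d1] Z2_distr[OF d1] Zx_meas[OF d1] Zx_distr[OF d1] d1 e])
    with small show "\<bar>(\<integral>\<omega>. Z2 d \<omega> * min 1 (exp (- l * \<alpha> * Z1 d \<omega>
                 - l\<^sup>2 * (\<Sum>i<d. (Zx d \<omega> i)\<^sup>2) / (2 * real d))) \<partial>M d)
            - (\<integral>\<omega>. Z2 d \<omega> * min 1 (exp (- l * \<alpha> * Z1 d \<omega> - l\<^sup>2 / 2)) \<partial>M d)\<bar> < \<epsilon>"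
      by linarith
  qed
qed

end
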